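(* Let $(X,d,\phi)$ be a flow. Then \begin{align*} \overline{\mathrm{mdim}}_M(\phi,X,d)&=\limsup_{\epsilon\to0}\frac{1}{\log\frac1\epsilon}\sup_{x\in X}h_d(x,\epsilon,\phi),\\ \underline{\mathrm{mdim}}_M(\phi,X,d)&=\liminf_{\epsilon\to0}\frac{1}{\log\frac1\epsilon}\sup_{x\in X}h_d(x,\epsilon,\phi). \end{align*}
   Context: A flow $(X,d,\phi)$: $(X,d)$ compact metric, $\phi:X\times\mathbb{R}\to X$ continuous, $\phi_t(x)=\phi(x,t)$, $\phi_0=\mathrm{id}$, $\phi_{t+s}=\phi_t\circ\phi_s$. Let $d_t(x,y)=\max_{s\in[0,t]}d(\phi_sx,\phi_sy)$. For $Z\subset X$, $r_t(\phi,Z,d,\epsilon)$ is the minimal cardinality of a set $E\subset X$ such that every $x\in Z$ has some $y\in E$ with $d_t(x,y)<\epsilon$, and $r(\phi,Z,d,\epsilon)=\limsup_{t\to\infty}\frac1t\log r_t(\phi,Z,d,\epsilon)$. $\overline{\mathrm{mdim}}_M(\phi,X,d)=\limsup_{\epsilon\to0}\frac{r(\phi,X,d,\epsilon)}{\log(1/\epsilon)}$, $\underline{\mathrm{mdim}}_M(\phi,X,d)=\liminf_{\epsilon\to0}\frac{r(\phi,X,d,\epsilon)}{\log(1/\epsilon)}$. The local entropy function is $h_d(x,\epsilon,\phi)=\inf\{r(\phi,K,d,\epsilon):K \text{ a closed neighborhood of } x\}$. *)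

theory Defs
  imports "HOL-Analysis.Analysis"
begin

definition is_flow :: "'a set \<Rightarrow> ('a \<Rightarrow> 'a \<Rightarrow> real) \<Rightarrow> (real \<Rightarrow> 'a \<Rightarrow> 'a) \<Rightarrow> bool" where
  "is_flow X d phi \<longleftrightarrow>
     Metric_space X d \<and>
     compact_space (Metric_space.mtopology X d) \<and>
     continuous_map (prod_topology (Metric_space.mtopology X d) euclideanreal)
                    (Metric_space.mtopology X d) (\<lambda>(x, t). phi t x) \<and>
     (\<forall>x\<in>X. phi 0 x = x) \<and>
     (\<forall>x\<in>X. \<forall>t s. phi (t + s) x = phi t (phi s x))"

definition bowen_dist :: "('a \<Rightarrow> 'a \<Rightarrow> real) \<Rightarrow> (real \<Rightarrow> 'a \<Rightarrow> 'a) \<Rightarrow> real \<Rightarrow> 'a \<Rightarrow> 'a \<Rightarrow> real" where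
  "bowen_dist d phi t x y = (SUP s\<in>{0..t}. d (phi s x) (phi s y))"

definition span_num :: "'a set \<Rightarrow> ('a \<Rightarrow> 'a \<Rightarrow> real) \<Rightarrow> (real \<Rightarrow> 'a \<Rightarrow> 'a) \<Rightarrow> 'a set \<Rightarrow> real \<Rightarrow> real \<Rightarrow> nat" where
  "span_num X d phi Z eps t =
     (LEAST n. \<exists>E. finite E \<and> E \<subseteq> X \<and> card E = n \<and>
                 (\<forall>x\<in>Z. \<exists>y\<in>E. bowen_dist d phi t x y < eps))"

definition span_rate :: "'a set \<Rightarrow> ('a \<Rightarrow> 'a \<Rightarrow> real) \<Rightarrow> (real \<Rightarrow> 'a \<Rightarrow> 'a) \<Rightarrow> 'a set \<Rightarrow> real \<Rightarrow> ereal" where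
  "span_rate X d phi Z eps =
     Limsup at_top (\<lambda>t. ereal (ln (real (span_num X d phi Z eps t)) / t))"

definition upper_mdim_M :: "'a set \<Rightarrow> ('a \<Rightarrow> 'a \<Rightarrow> real) \<Rightarrow> (real \<Rightarrow> 'a \<Rightarrow> 'a) \<Rightarrow> ereal" where
  "upper_mdim_M X d phi =
     Limsup (at_right 0) (\<lambda>eps. span_rate X d phi X eps / ereal (ln (1 / eps)))"

definition lower_mdim_M :: "'a set \<Rightarrow> ('a \<Rightarrow> 'a \<Rightarrow> real) \<Rightarrow> (real \<Rightarrow> 'a \<Rightarrow> 'a) \<Rightarrow> ereal" where
  "lower_mdim_M X d phi =
     Liminf (at_right 0) (\<lambda>eps. span_rate X d phi X eps / ereal (ln (1 / eps)))"

definition local_entropy :: "'a set \<Rightarrow> ('a \<Rightarrow> 'a \<Rightarrow> real) \<Rightarrow> (real \<Rightarrow> 'a \<Rightarrow> 'a) \<Rightarrow> 'a \<Rightarrow> real \<Rightarrow> ereal" where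
  "local_entropy X d phi x eps =
     (INF K\<in>{K. closedin (Metric_space.mtopology X d) K \<and>
               x \<in> (Metric_space.mtopology X d) interior_of K}. span_rate X d phi K eps)"

end

theory Submission
  imports Defs
begin

lemma finite_point_cover:
  assumes "compact_space T" "\<And>x. x \<in> topspace T \<Longrightarrow> openin T (U x) \<and> x \<in> U x"
  shows "\<exists>D. finite D \<and> D \<subseteq> topspace T \<and> topspace T \<subseteq> (\<Union>x\<in>D. U x)"
proof -
  have "\<exists>\<F>. finite \<F> \<and> \<F> \<subseteq> U ` topspace T \<and> topspace T \<subseteq> \<Union>\<F>"
    using assms unfolding compact_space_def
    by (intro compactinD) auto
  then obtain \<F> where F: "finite \<F>" "\<F> \<subseteq> U ` topspace T" "topspace T \<subseteq> \<Union>\<F>" by blast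
  then obtain D where "D \<subseteq> topspace T" "finite D" "\<F> = U ` D"
    by (meson finite_subset_image)
  then show ?thesis using F by auto
qed

lemma span_num_le:
  assumes "finite E" "E \<subseteq> X" "\<forall>x\<in>Z. \<exists>y\<in>E. bowen_dist d phi t x y < eps"
  shows "span_num X d phi Z eps t \<le> card E"
  unfolding span_num_def using assms by (intro Least_le) blast

lemma span_num_spec:
  assumes "finite E" "E \<subseteq> X" "\<forall>x\<in>Z. \<exists>y\<in>E. bowen_dist d phi t x y < eps"
  shows "\<exists>E. finite E \<and> E \<subseteq> X \<and> card E = span_num X d phi Z eps t \<and>
                 (\<forall>x\<in>Z. \<exists>y\<in>E. bowen_dist d phi t x y < eps)"
proof -
  define P where "P n = (\<exists>E. finite E \<and> E \<subseteq> X \<and> card E = n \<and>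
                 (\<forall>x\<in>Z. \<exists>y\<in>E. bowen_dist d phi t x y < eps))" for n
  have eq: "span_num X d phi Z eps t = Least P" unfolding span_num_def P_def by simp
  have "P (card E)" unfolding P_def using assms by blast
  then have "P (Least P)" by (rule LeastI)
  then show ?thesis unfolding eq P_def .
qed

lemma bowen_small:
  assumes fl: "is_flow X d phi" and eps: "eps > 0" and t: "t \<ge> 0" and y: "y \<in> X"
  shows "\<exists>U. openin (Metric_space.mtopology X d) U \<and> y \<in> U \<and>
             (\<forall>x\<in>U. bowen_dist d phi t x y < eps)"
proof -
  interpret Metric_space X d using fl by (simp add: is_flow_def)
  have cphi: "continuous_map (prod_topology mtopology euclideanreal) mtopology (\<lambda>(x, t). phi t x)"
    using fl by (simp add: is_flow_def)
  have c1: "continuous_map (prod_topology mtopology euclideanreal) (mtopology_of (metric (X,d))) (\<lambda>p. phi (snd p) (fst p))"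
    using cphi by (simp add: case_prod_beta')
  have c2': "continuous_map (prod_topology mtopology euclideanreal) (prod_topology mtopology euclideanreal) (\<lambda>p. (y, snd p))"
    using y by (intro continuous_map_pairedI) (auto intro: continuous_map_snd)
  have c2: "continuous_map (prod_topology mtopology euclideanreal) (mtopology_of (metric (X,d))) (\<lambda>p. phi (snd p) y)"
    using continuous_map_compose[OF c2' cphi] by (simp add: o_def)
  have cd: "continuous_map (prod_topology mtopology euclideanreal) euclideanreal (\<lambda>p. d (phi (snd p) (fst p)) (phi (snd p) y))"
    using continuous_map_mdist[OF c1 c2] by simp
  define W where "W = {p \<in> topspace (prod_topology mtopology euclideanreal). d (phi (snd p) (fst p)) (phi (snd p) y) \<in> {..<eps/2}}"
  have W: "openin (prod_topology mtopology euclideanreal) W"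
    unfolding W_def by (rule openin_continuous_map_preimage[OF cd]) simp
  have phiX: "phi s x \<in> X" if "x \<in> X" for s x
    using continuous_map_image_subset_topspace[OF cphi] that by auto
  have sub: "{y} \<times> {0..t} \<subseteq> W"
    unfolding W_def using y phiX eps by auto
  obtain U V where UV: "openin mtopology U" "openin euclideanreal V" "y \<in> U" "{0..t} \<subseteq> V" "U \<times> V \<subseteq> W"
    using tube_lemma_right[OF W _ _ sub] y by auto
  have "bowen_dist d phi t x y < eps" if "x \<in> U" for x
  proof -
    have "bowen_dist d phi t x y \<le> eps/2"
      unfolding bowen_dist_def
    proof (rule cSUP_least)
      show "{0..t} \<noteq> {}" using t by simp
      fix s assume "s \<in> {0..t}"
      then have "(x, s) \<in> W" using UV that by blast
      then show "d (phi s x) (phi s y) \<le> eps/2" unfolding W_def by simp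
    qed
    then show ?thesis using eps by simp
  qed
  then show ?thesis using UV by blast
qed

lemma span_exists:
  assumes fl: "is_flow X d phi" and eps: "eps > 0" and t: "t \<ge> 0"
  shows "\<exists>E. finite E \<and> E \<subseteq> X \<and> (\<forall>x\<in>X. \<exists>y\<in>E. bowen_dist d phi t x y < eps)"
proof -
  interpret Metric_space X d using fl by (simp add: is_flow_def)
  have cs: "compact_space mtopology" using fl by (simp add: is_flow_def)
  obtain U where U: "\<And>y. y \<in> X \<Longrightarrow> openin mtopology (U y) \<and> y \<in> U y \<and>
             (\<forall>x\<in>U y. bowen_dist d phi t x y < eps)"
    using bowen_small[OF fl eps t] by metis
  obtain D where D: "finite D" "D \<subseteq> X" "X \<subseteq> (\<Union>x\<in>D. U x)"
    using finite_point_cover[OF cs, of U] U by auto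
  show ?thesis
    using D U by (intro exI[of _ D]) blast
qed

lemma rate_le_sup:
  assumes fl: "is_flow X d phi" and ne: "X \<noteq> {}" and eps: "eps > 0"
  shows "span_rate X d phi X eps \<le> (SUP x\<in>X. local_entropy X d phi x eps)"
proof -
  interpret Metric_space X d using fl by (simp add: is_flow_def)
  have cs: "compact_space mtopology" using fl by (simp add: is_flow_def)
  define S where "S = (SUP x\<in>X. local_entropy X d phi x eps)"
  have "\<forall>y>S. eventually (\<lambda>t. y > ereal (ln (real (span_num X d phi X eps t)) / t)) at_top"
  proof (intro allI impI)
    fix y assume yS: "y > S"
    obtain b where b: "S < ereal b" "ereal b < y" using ereal_dense2[OF yS] by blast
    have "\<exists>K. closedin mtopology K \<and> x \<in> mtopology interior_of K \<and> span_rate X d phi K eps < ereal b"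
      if "x \<in> X" for x
    proof -
      have "local_entropy X d phi x eps \<le> S" unfolding S_def using that by (rule SUP_upper)
      then have "local_entropy X d phi x eps < ereal b" using b by simp
      then show ?thesis unfolding local_entropy_def INF_less_iff by auto
    qed
    then obtain K where K: "\<And>x. x \<in> X \<Longrightarrow> closedin mtopology (K x) \<and> x \<in> mtopology interior_of (K x) \<and> span_rate X d phi (K x) eps < ereal b"
      by metis
    obtain D where D: "finite D" "D \<subseteq> X" "X \<subseteq> (\<Union>x\<in>D. mtopology interior_of (K x))"
      using finite_point_cover[OF cs, of "\<lambda>x. mtopology interior_of (K x)"] K by auto
    have KX: "K x \<subseteq> X" if "x \<in> X" for x
      using K[OF that] closedin_subset by force
    have XK: "X \<subseteq> (\<Union>x\<in>D. K x)" using D interior_of_subset by fastforce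
    have Dne: "D \<noteq> {}" using ne XK by auto
    show "eventually (\<lambda>t. y > ereal (ln (real (span_num X d phi X eps t)) / t)) at_top"
    proof (cases y)
      case PInf then show ?thesis by simp
    next
      case MInf then show ?thesis using b by simp
    next
      case (real c)
      have cb: "c > b" using b real by simp
      have ev1: "eventually (\<lambda>t. \<forall>x\<in>D. ereal (ln (real (span_num X d phi (K x) eps t)) / t) < ereal b) at_top"
        using D(1) D(2) K unfolding span_rate_def
        by (intro eventually_ball_finite ballI Limsup_lessD) auto
      have ev2: "eventually (\<lambda>t. t > max 1 (ln (real (card D)) / (c - b))) at_top"
        by (rule eventually_gt_at_top)
      show ?thesis using ev1 ev2
      proof eventually_elim
        case (elim t)
        have t1: "t > 1" and tl: "t > ln (real (card D)) / (c - b)" using elim(2) by auto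
        have h: "ln (real (card D)) < t * (c - b)"
          using tl cb pos_divide_less_eq[of "c - b" "ln (real (card D))" t] by simp
        have lnD: "ln (real (card D)) / t < c - b"
          using h t1 pos_divide_less_eq[of t "ln (real (card D))" "c - b"] by (simp add: mult.commute)
        obtain E0 where E0: "finite E0" "E0 \<subseteq> X" "\<forall>x\<in>X. \<exists>y\<in>E0. bowen_dist d phi t x y < eps"
          using span_exists[OF fl eps, of t] t1 by auto
        have "\<forall>x\<in>D. \<exists>E. finite E \<and> E \<subseteq> X \<and> card E = span_num X d phi (K x) eps t \<and>
                 (\<forall>z\<in>K x. \<exists>y\<in>E. bowen_dist d phi t z y < eps)"
        proof
          fix x assume "x \<in> D"
          then have KXx: "K x \<subseteq> X" using KX D(2) by blast
          show "\<exists>E. finite E \<and> E \<subseteq> X \<and> card E = span_num X d phi (K x) eps t \<and>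
                 (\<forall>z\<in>K x. \<exists>y\<in>E. bowen_dist d phi t z y < eps)"
            by (rule span_num_spec[OF E0(1) E0(2)]) (use E0(3) KXx in blast)
        qed
        from bchoice[OF this] obtain E where E0': "\<forall>x\<in>D. finite (E x) \<and> E x \<subseteq> X \<and> card (E x) = span_num X d phi (K x) eps t \<and>
                 (\<forall>z\<in>K x. \<exists>y\<in>E x. bowen_dist d phi t z y < eps)" ..
        have E: "\<And>x. x \<in> D \<Longrightarrow> finite (E x) \<and> E x \<subseteq> X \<and> card (E x) = span_num X d phi (K x) eps t \<and>
                 (\<forall>z\<in>K x. \<exists>y\<in>E x. bowen_dist d phi t z y < eps)"
          using E0' by blast
        define N where "N = span_num X d phi X eps t"
        define M where "M = Max ((\<lambda>x. span_num X d phi (K x) eps t) ` D)"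
        have "M \<in> (\<lambda>x. span_num X d phi (K x) eps t) ` D"
          unfolding M_def using D(1) Dne by (intro Max_in) auto
        then obtain j where j: "j \<in> D" "M = span_num X d phi (K j) eps t" by blast
        have N1: "N \<ge> 1"
        proof -
          obtain E' where E': "finite E'" "card E' = N" "\<forall>x\<in>X. \<exists>y\<in>E'. bowen_dist d phi t x y < eps"
            using span_num_spec[OF E0] unfolding N_def by blast
          then have "E' \<noteq> {}" using ne by auto
          then have "card E' > 0" using E'(1) by (simp add: card_gt_0_iff)
          then show ?thesis using E'(2) by simp
        qed
        have "N \<le> card (\<Union>x\<in>D. E x)"
          unfolding N_def
        proof (rule span_num_le)
          show "finite (\<Union>x\<in>D. E x)" using D(1) E by auto
          show "(\<Union>x\<in>D. E x) \<subseteq> X" using E by auto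
          show "\<forall>x\<in>X. \<exists>y\<in>(\<Union>x\<in>D. E x). bowen_dist d phi t x y < eps"
          proof
            fix z assume "z \<in> X"
            then obtain x where "x \<in> D" "z \<in> K x" using XK by auto
            then show "\<exists>y\<in>(\<Union>x\<in>D. E x). bowen_dist d phi t z y < eps" using E by blast
          qed
        qed
        also have "\<dots> \<le> (\<Sum>x\<in>D. card (E x))" by (rule card_UN_le[OF D(1)])
        also have "\<dots> = (\<Sum>x\<in>D. span_num X d phi (K x) eps t)" using E by simp
        also have "\<dots> \<le> card D * M"
          using sum_bounded_above[of D "\<lambda>x. span_num X d phi (K x) eps t" M] D(1) unfolding M_def
          by auto
        finally have NM: "N \<le> card D * M" .
        have "card D * M \<noteq> 0" using NM N1 by linarith
        then have M1: "M \<ge> 1" "card D \<ge> 1" by auto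
        have NDM: "real N \<le> real (card D * M)" using NM by (simp only: of_nat_le_iff)
        have "ln (real N) \<le> ln (real (card D * M))"
          using NDM N1 M1 by (subst ln_le_cancel_iff) auto
        also have "\<dots> = ln (real (card D)) + ln (real M)"
          using M1 by (simp add: ln_mult)
        finally have lnN0: "ln (real N) \<le> ln (real (card D)) + ln (real M)" .
        have lnN: "ln (real N) / t \<le> ln (real (card D)) / t + ln (real M) / t"
          using divide_right_mono[OF lnN0, of t] t1 by (simp add: add_divide_distrib)
        have "ln (real M) / t < b" using elim(1) j by auto
        then have "ln (real N) / t < c" using lnN lnD by linarith
        then show ?case unfolding N_def real by simp
      qed
    qed
  qed
  then show ?thesis unfolding span_rate_def S_def by (simp add: Limsup_le_iff)
qed

lemma sup_le_rate:
  assumes fl: "is_flow X d phi"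
  shows "(SUP x\<in>X. local_entropy X d phi x eps) \<le> span_rate X d phi X eps"
proof (rule SUP_least)
  interpret Metric_space X d using fl by (simp add: is_flow_def)
  fix x assume "x \<in> X"
  then show "local_entropy X d phi x eps \<le> span_rate X d phi X eps"
    unfolding local_entropy_def
    using interior_of_topspace[of mtopology] by (intro INF_lower) auto
qed

theorem theorem1p4:
  fixes X :: "'a set" and d :: "'a \<Rightarrow> 'a \<Rightarrow> real" and phi :: "real \<Rightarrow> 'a \<Rightarrow> 'a"
  assumes "is_flow X d phi" and "X \<noteq> {}"
  shows "upper_mdim_M X d phi =
           Limsup (at_right 0) (\<lambda>eps. (SUP x\<in>X. local_entropy X d phi x eps) / ereal (ln (1 / eps))) \<and>
         lower_mdim_M X d phi =
           Liminf (at_right 0) (\<lambda>eps. (SUP x\<in>X. local_entropy X d phi x eps) / ereal (ln (1 / eps)))"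
proof -
  have ev: "eventually (\<lambda>eps. span_rate X d phi X eps / ereal (ln (1 / eps)) =
      (SUP x\<in>X. local_entropy X d phi x eps) / ereal (ln (1 / eps))) (at_right (0::real))"
    using eventually_at_right_less[of 0]
  proof eventually_elim
    case (elim eps)
    then show ?case
      using rate_le_sup[OF assms elim] sup_le_rate[OF assms(1), of eps] by (simp add: antisym)
  qed
  show ?thesis
    unfolding upper_mdim_M_def lower_mdim_M_def
    using Limsup_eq[OF ev] Liminf_eq[OF ev] by simp
qed

end
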